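(* Let $l,t$ be integers with $2\leq l\leq t$. If $s$ is sufficiently large (in terms of $l,t$), then for all integers $n\geq 2s+1$ and $x$ with $l\leq x\leq s$, $$ex(n,\{K_{l,t},M_{s+1}\},x)\leq (l-1)n+(t-1)\binom{s}{l}-\left\lceil\frac{s(l-1)}{2}\right\rceil.$$
   Context: All graphs are finite and simple. $K_{l,t}$ is the complete bipartite graph with parts of sizes $l,t$; $M_{s+1}$ is the matching of $s+1$ disjoint edges. For a graph $G$ with matching number at most $s$, say $X\subseteq V(G)$ is admissible if $|X|+\sum_{i=1}^m\lfloor |V(C_i)|/2\rfloor\leq s$, where $C_1,\dots,C_m$ are the components of $G-X$; let $x(G)$ be the maximum size of an admissible set. Let $\mathscr{G}_x$ be the set of graphs on $n$ vertices containing neither $K_{l,t}$ nor $M_{s+1}$ as a subgraph and with $x(G)=x$, and $ex(n,\{K_{l,t},M_{s+1}\},x)=\max_{G\in\mathscr{G}_x}e(G)$. *)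

theory Defs
  imports Complex_Main
begin

definition is_graph :: "nat \<Rightarrow> nat set set \<Rightarrow> bool" where
  "is_graph n E \<longleftrightarrow> (\<forall>e\<in>E. \<exists>u v. e = {u, v} \<and> u \<noteq> v \<and> u < n \<and> v < n)"

definition contains_Klt :: "nat \<Rightarrow> nat set set \<Rightarrow> nat \<Rightarrow> nat \<Rightarrow> bool" where
  "contains_Klt n E l t \<longleftrightarrow> (\<exists>A B. A \<subseteq> {0..<n} \<and> B \<subseteq> {0..<n} \<and> A \<inter> B = {} \<and>
      card A = l \<and> card B = t \<and> (\<forall>a\<in>A. \<forall>b\<in>B. {a, b} \<in> E))"

definition contains_matching :: "nat set set \<Rightarrow> nat \<Rightarrow> bool" where
  "contains_matching E k \<longleftrightarrow> (\<exists>M. M \<subseteq> E \<and> card M = k \<and>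
      (\<forall>e\<in>M. \<forall>f\<in>M. e \<noteq> f \<longrightarrow> e \<inter> f = {}))"

definition adj_rel :: "nat set set \<Rightarrow> nat set \<Rightarrow> (nat \<times> nat) set" where
  "adj_rel E W = {(u, v). u \<in> W \<and> v \<in> W \<and> {u, v} \<in> E}"

definition components :: "nat \<Rightarrow> nat set set \<Rightarrow> nat set \<Rightarrow> nat set set" where
  "components n E X = (\<lambda>v. {u \<in> {0..<n} - X. (v, u) \<in> (adj_rel E ({0..<n} - X))\<^sup>*}) ` ({0..<n} - X)"

definition admissible :: "nat \<Rightarrow> nat set set \<Rightarrow> nat \<Rightarrow> nat set \<Rightarrow> bool" where
  "admissible n E s X \<longleftrightarrow> X \<subseteq> {0..<n} \<and>
      card X + (\<Sum>C\<in>components n E X. card C div 2) \<le> s"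

definition xG :: "nat \<Rightarrow> nat set set \<Rightarrow> nat \<Rightarrow> nat" where
  "xG n E s = Max {card X | X. admissible n E s X}"

definition Gfam :: "nat \<Rightarrow> nat \<Rightarrow> nat \<Rightarrow> nat \<Rightarrow> nat \<Rightarrow> nat set set set" where
  "Gfam n l t s x = {E. is_graph n E \<and> \<not> contains_Klt n E l t \<and>
      \<not> contains_matching E (s + 1) \<and> xG n E s = x}"

text \<open>ex(n,{K_{l,t},M_{s+1}},x) = max e(G) over \<G>_x (Sup of a finite set of naturals;
  0 if the family is empty).\<close>
definition ex_x :: "nat \<Rightarrow> nat \<Rightarrow> nat \<Rightarrow> nat \<Rightarrow> nat \<Rightarrow> nat" where
  "ex_x n l t s x = Sup (card ` Gfam n l t s x)"

end

theory Submission
  imports Defs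
begin

definition compset :: "nat set set \<Rightarrow> nat set \<Rightarrow> nat \<Rightarrow> nat set" where
  "compset F W v = {u \<in> W. (v,u) \<in> (adj_rel F W)\<^sup>*}"
definition compsW :: "nat set set \<Rightarrow> nat set \<Rightarrow> nat set set" where
  "compsW F W = compset F W ` W"

lemma components_eq: "components n E X = compsW E ({0..<n} - X)"
  by (simp add: components_def compsW_def compset_def)

lemma adj_rel_sym: "(u,v) \<in> adj_rel F W \<Longrightarrow> (v,u) \<in> adj_rel F W"
  by (auto simp: adj_rel_def insert_commute)

lemma adj_rel_conv: "(adj_rel F W)\<inverse> = adj_rel F W"
  using adj_rel_sym by auto

lemma rt_sym: "(u,v) \<in> (adj_rel F W)\<^sup>* \<Longrightarrow> (v,u) \<in> (adj_rel F W)\<^sup>*"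
  by (metis adj_rel_conv rtrancl_converseI)

lemma rt_W: "(u,v) \<in> (adj_rel F W)\<^sup>* \<Longrightarrow> u \<in> W \<Longrightarrow> v \<in> W"
  by (induction rule: rtrancl_induct) (auto simp: adj_rel_def)

lemma compset_self: "v \<in> W \<Longrightarrow> v \<in> compset F W v"
  by (simp add: compset_def)

lemma compset_sub: "compset F W v \<subseteq> W"
  by (auto simp: compset_def)

lemma compset_eq: "u \<in> compset F W v \<Longrightarrow> compset F W u = compset F W v"
  unfolding compset_def
  by (auto intro: rtrancl_trans dest: rt_sym)

lemma compset_mem_sym: "u \<in> compset F W v \<Longrightarrow> v \<in> W \<Longrightarrow> v \<in> compset F W u"
  unfolding compset_def by (auto dest: rt_sym)

lemma compsW_disj: "C \<in> compsW F W \<Longrightarrow> C' \<in> compsW F W \<Longrightarrow> x \<in> C \<Longrightarrow> x \<in> C' \<Longrightarrow> C = C'"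
  unfolding compsW_def by (metis compset_eq imageE)

lemma compset_edge: "u \<in> compset F W v \<Longrightarrow> {u,w} \<in> F \<Longrightarrow> w \<in> W \<Longrightarrow> w \<in> compset F W v"
  unfolding compset_def adj_rel_def
  by (auto intro: rtrancl_into_rtrancl)

lemma compsW_edge: "C \<in> compsW F W \<Longrightarrow> u \<in> C \<Longrightarrow> {u,w} \<in> F \<Longrightarrow> w \<in> W \<Longrightarrow> w \<in> C"
  unfolding compsW_def using compset_edge by blast

lemma compsW_union: "\<Union>(compsW F W) = W"
  unfolding compsW_def using compset_self compset_sub by blast

lemma compsW_finite: "finite W \<Longrightarrow> finite (compsW F W)"
  unfolding compsW_def by simp

lemma compsW_sub: "C \<in> compsW F W \<Longrightarrow> C \<subseteq> W"
  unfolding compsW_def using compset_sub by blast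

definition matchW :: "nat set set \<Rightarrow> nat set \<Rightarrow> nat set set \<Rightarrow> bool" where
  "matchW F W M \<longleftrightarrow> M \<subseteq> F \<and> (\<forall>e\<in>M. e \<subseteq> W) \<and> (\<forall>e\<in>M. \<forall>f\<in>M. e \<noteq> f \<longrightarrow> e \<inter> f = {})"

definition cov :: "nat set set \<Rightarrow> nat \<Rightarrow> bool" where
  "cov M v \<longleftrightarrow> (\<exists>e\<in>M. v \<in> e)"

definition maxW :: "nat set set \<Rightarrow> nat set \<Rightarrow> nat set set \<Rightarrow> bool" where
  "maxW F W M \<longleftrightarrow> matchW F W M \<and> (\<forall>M'. matchW F W M' \<longrightarrow> card M' \<le> card M)"

lemma matchW_finite: "finite W \<Longrightarrow> matchW F W M \<Longrightarrow> finite M"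
  unfolding matchW_def by (meson Pow_iff finite_Pow_iff finite_subset subsetI)

lemma matchW_set_finite: "finite W \<Longrightarrow> finite {M. matchW F W M}"
proof -
  assume "finite W"
  have "{M. matchW F W M} \<subseteq> Pow (Pow W)" unfolding matchW_def by auto
  then show ?thesis using \<open>finite W\<close> by (meson finite_Pow_iff finite_subset)
qed

lemma ex_maxW: assumes "finite W" shows "\<exists>M. maxW F W M"
proof -
  let ?S = "{M. matchW F W M}"
  have fin: "finite (card ` ?S)" using matchW_set_finite[OF assms] by simp
  have "{} \<in> ?S" by (simp add: matchW_def)
  then have ne: "card ` ?S \<noteq> {}" by blast
  obtain M where "M \<in> ?S" "card M = Max (card ` ?S)" using Max_in[OF fin ne] by auto
  then show ?thesis unfolding maxW_def using fin by auto
qed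

lemma match_one: "matchW F W M \<Longrightarrow> e \<in> M \<Longrightarrow> f \<in> M \<Longrightarrow> y \<in> e \<Longrightarrow> y \<in> f \<Longrightarrow> e = f"
  unfolding matchW_def by blast


lemma path_split:
  assumes "(v,u) \<in> (R \<union> {(x,y),(y,x)})\<^sup>*"
  shows "(v,u) \<in> R\<^sup>* \<or> (v,x) \<in> R\<^sup>* \<or> (v,y) \<in> R\<^sup>*"
  using assms
proof (induction rule: rtrancl_induct)
  case base then show ?case by simp
next
  case (step z u)
  then show ?case by (auto intro: rtrancl_into_rtrancl)
qed

lemma adj_rel_insert_sub:
  "adj_rel (insert {x,y} F) V \<subseteq> adj_rel F V \<union> {(x,y),(y,x)}"
  unfolding adj_rel_def by (auto simp: doubleton_eq_iff)

lemma adj_rel_mono: "F \<subseteq> F' \<Longrightarrow> adj_rel F V \<subseteq> adj_rel F' V"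
  unfolding adj_rel_def by auto

lemma compset_empty: "v \<in> V \<Longrightarrow> compset {} V v = {v}"
  unfolding compset_def adj_rel_def by auto

lemma comp_count:
  assumes "finite V" "finite F" "\<forall>e\<in>F. \<exists>x y. e = {x,y} \<and> x \<noteq> y \<and> x \<in> V \<and> y \<in> V"
  shows "card V \<le> card F + card (compsW F V)"
  using assms(2,3)
proof (induction F rule: finite_induct)
  case empty
  have "compsW {} V = (\<lambda>v. {v}) ` V"
    unfolding compsW_def using compset_empty by auto
  moreover have "card ((\<lambda>v. {v}) ` V) = card V"
    by (rule card_image) (auto simp: inj_on_def)
  ultimately show ?case by simp
next
  case (insert e F)
  obtain x y where e: "e = {x,y}" "x \<noteq> y" "x \<in> V" "y \<in> V" using insert.prems by blast
  have IH: "card V \<le> card F + card (compsW F V)" using insert by auto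
  let ?c = "compset F V" and ?c' = "compset (insert e F) V"
  let ?R = "adj_rel F V" and ?R' = "adj_rel (insert e F) V"
  define U where "U = ?c x \<union> ?c y"
  define B where "B = ?c ` (V - U)"
  have RR: "?R' \<subseteq> ?R \<union> {(x,y),(y,x)}" using adj_rel_insert_sub e by simp
  have RR2: "?R \<subseteq> ?R'" by (rule adj_rel_mono) auto
  have same: "?c' v = ?c v" if "v \<in> V - U" for v
  proof
    show "?c v \<subseteq> ?c' v" unfolding compset_def using rtrancl_mono[OF RR2] by auto
  next
    show "?c' v \<subseteq> ?c v"
    proof
      fix u assume "u \<in> ?c' v"
      then have uV: "u \<in> V" and p: "(v,u) \<in> ?R'\<^sup>*" unfolding compset_def by auto
      have "(v,u) \<in> (?R \<union> {(x,y),(y,x)})\<^sup>*" using rtrancl_mono[OF RR] p by auto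
      then have "(v,u) \<in> ?R\<^sup>* \<or> (v,x) \<in> ?R\<^sup>* \<or> (v,y) \<in> ?R\<^sup>*" by (rule path_split)
      moreover have "(v,x) \<notin> ?R\<^sup>*"
      proof
        assume "(v,x) \<in> ?R\<^sup>*"
        then have "(x,v) \<in> ?R\<^sup>*" by (rule rt_sym)
        then have "v \<in> ?c x" using that unfolding compset_def by auto
        then show False using that U_def by auto
      qed
      moreover have "(v,y) \<notin> ?R\<^sup>*"
      proof
        assume "(v,y) \<in> ?R\<^sup>*"
        then have "(y,v) \<in> ?R\<^sup>*" by (rule rt_sym)
        then have "v \<in> ?c y" using that unfolding compset_def by auto
        then show False using that U_def by auto
      qed
      ultimately show "u \<in> ?c v" using uV unfolding compset_def by auto
    qed
  qed
  have sub1: "compsW F V \<subseteq> insert (?c x) (insert (?c y) B)"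
  proof
    fix C assume "C \<in> compsW F V"
    then obtain v where v: "v \<in> V" "C = ?c v" unfolding compsW_def by auto
    show "C \<in> insert (?c x) (insert (?c y) B)"
    proof (cases "v \<in> U")
      case True
      then show ?thesis unfolding U_def using v compset_eq by blast
    next
      case False
      then show ?thesis unfolding B_def using v by blast
    qed
  qed
  have Bsub: "B \<subseteq> compsW (insert e F) V"
    unfolding B_def compsW_def using same by auto
  have cx: "?c' x \<in> compsW (insert e F) V" unfolding compsW_def using e by auto
  have cxB: "?c' x \<notin> B"
  proof
    assume "?c' x \<in> B"
    then obtain v where v: "v \<in> V - U" "?c' x = ?c v" unfolding B_def using same by auto
    have "x \<in> ?c' x" using compset_self e by metis
    then have "x \<in> ?c v" using v by simp
    then have "?c x = ?c v" using compset_eq by metis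
    then have "v \<in> ?c x" using compset_self v by auto
    then show False using v U_def by auto
  qed
  have finB: "finite B" unfolding B_def using assms(1) by simp
  have fin': "finite (compsW (insert e F) V)" using compsW_finite assms(1) by blast
  have "card (compsW F V) \<le> card (insert (?c x) (insert (?c y) B))"
    using sub1 finB by (intro card_mono) auto
  also have "\<dots> \<le> card B + 2" using finB
    by (simp add: card_insert_if)
  finally have A: "card (compsW F V) \<le> card B + 2" .
  have "card (insert (?c' x) B) \<le> card (compsW (insert e F) V)"
    using Bsub cx fin' by (intro card_mono) auto
  then have "card B + 1 \<le> card (compsW (insert e F) V)" using cxB finB by simp
  then show ?case using IH A insert.hyps by simp
qed

lemma handshake:
  assumes "finite V" "finite F" "\<forall>e\<in>F. card e = 2 \<and> e \<subseteq> V"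
  shows "(\<Sum>y\<in>V. card {e\<in>F. y \<in> e}) = 2 * card F"
proof -
  have "(\<Sum>y\<in>V. card {e\<in>F. y \<in> e}) = (\<Sum>y\<in>V. \<Sum>e\<in>F. if y \<in> e then 1 else 0)"
    using assms(2) by (simp add: sum.If_cases Int_def)
  also have "\<dots> = (\<Sum>e\<in>F. \<Sum>y\<in>V. if y \<in> e then 1 else 0)" by (rule sum.swap)
  also have "\<dots> = (\<Sum>e\<in>F. card e)"
  proof (rule sum.cong)
    fix e assume "e \<in> F"
    then have "V \<inter> {y. y \<in> e} = e" using assms(3) by auto
    then show "(\<Sum>y\<in>V. if y \<in> e then 1 else 0) = card e"
      using assms(1) by (simp add: sum.If_cases)
  qed simp
  also have "\<dots> = 2 * card F" using assms(3) by simp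
  finally show ?thesis .
qed


locale sg =
  fixes E :: "nat set set"
  assumes two: "e \<in> E \<Longrightarrow> \<exists>u v. e = {u,v} \<and> u \<noteq> v"
begin

lemma card_edge: "e \<in> E \<Longrightarrow> card e = 2"
  using two by fastforce

lemma adj_neq: "(u,w) \<in> adj_rel E W \<Longrightarrow> u \<noteq> w"
proof
  assume "(u,w) \<in> adj_rel E W" "u = w"
  then have "{u} \<in> E" unfolding adj_rel_def by auto
  then show False using card_edge by fastforce
qed

lemma aug:
  assumes "finite W" "maxW E W M" "\<not> cov M p" "\<not> cov M q" "(p,q) \<in> adj_rel E W"
  shows False
proof -
  have m: "matchW E W M" and mx: "\<And>M'. matchW E W M' \<Longrightarrow> card M' \<le> card M"
    using assms(2) unfolding maxW_def by auto
  have e: "{p,q} \<in> E" "p \<in> W" "q \<in> W" using assms(5) unfolding adj_rel_def by auto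
  have nin: "{p,q} \<notin> M" using assms(3) unfolding cov_def by auto
  have "matchW E W (insert {p,q} M)"
    using m e assms(3,4) unfolding matchW_def cov_def by auto
  then have "card (insert {p,q} M) \<le> card M" by (rule mx)
  moreover have "finite M" using matchW_finite[OF assms(1) m] .
  ultimately show False using nin by simp
qed

lemma comp_closed:
  assumes "y \<in> compset D W a" "f \<in> D" "f \<subseteq> W" "y \<in> f" "D \<subseteq> E"
  shows "f \<subseteq> compset D W a"
proof -
  obtain p q where f: "f = {p,q}" using two assms(2,5) by blast
  show ?thesis
  proof (cases "y = p")
    case True
    then have "q \<in> compset D W a" using compset_edge[OF assms(1), of q] assms f by auto
    then show ?thesis using True assms(1) f by auto
  next
    case False
    then have "y = q" using assms(4) f by auto
    then have "{y,p} \<in> D" using f assms(2) by (simp add: insert_commute)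
    then have "p \<in> compset D W a" using compset_edge[OF assms(1), of p] assms f by auto
    then show ?thesis using \<open>y = q\<close> assms(1) f by auto
  qed
qed

lemma flip_match:
  assumes A: "matchW E W A" and B: "matchW E W B" and D: "D = (A - B) \<union> (B - A)"
    and K: "K = compset D W a"
  shows "matchW E W ((A - {e\<in>D. e \<subseteq> K}) \<union> (B \<inter> {e\<in>D. e \<subseteq> K}))"
proof -
  have AE: "A \<subseteq> E" "\<forall>e\<in>A. e \<subseteq> W" and BE: "B \<subseteq> E" "\<forall>e\<in>B. e \<subseteq> W"
    using A B unfolding matchW_def by auto
  have DE: "D \<subseteq> E" using D AE BE by auto
  have cl: "f \<subseteq> K" if "y \<in> K" "f \<in> D" "y \<in> f" for y f
    using comp_closed[of y D W a f] that K DE D AE BE by auto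
  let ?DK = "{e\<in>D. e \<subseteq> K}"
  have disj: "e \<inter> f = {}" if "e \<in> A - ?DK" "f \<in> B \<inter> ?DK" for e f
  proof (rule ccontr)
    assume "e \<inter> f \<noteq> {}"
    then obtain y where y: "y \<in> e" "y \<in> f" by auto
    have "y \<in> K" using that y by auto
    show False
    proof (cases "e \<in> B")
      case True
      then have "e = f" using match_one[OF B True _ y] that by auto
      then show False using that by auto
    next
      case False
      then have "e \<in> D" using that D by auto
      then have "e \<subseteq> K" using cl \<open>y \<in> K\<close> y by auto
      then show False using that \<open>e \<in> D\<close> by auto
    qed
  qed
  show ?thesis
    unfolding matchW_def
  proof (intro conjI ballI impI)
    show "A - ?DK \<union> B \<inter> ?DK \<subseteq> E" using AE BE by auto
  next
    fix e assume "e \<in> A - ?DK \<union> B \<inter> ?DK"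
    then show "e \<subseteq> W" using AE BE by auto
  next
    fix e f assume ef: "e \<in> A - ?DK \<union> B \<inter> ?DK" "f \<in> A - ?DK \<union> B \<inter> ?DK" "e \<noteq> f"
    show "e \<inter> f = {}"
    proof -
      { assume "e \<in> A" "f \<in> A" then have ?thesis using A ef(3) unfolding matchW_def by auto }
      moreover
      { assume "e \<in> B" "f \<in> B" then have ?thesis using B ef(3) unfolding matchW_def by auto }
      moreover
      { assume "e \<in> A - ?DK" "f \<in> B \<inter> ?DK" then have ?thesis using disj by auto }
      moreover
      { assume "f \<in> A - ?DK" "e \<in> B \<inter> ?DK" then have ?thesis using disj by blast }
      ultimately show ?thesis using ef(1,2) by blast
    qed
  qed
qed

lemma flip_card:
  assumes "finite A" "finite B"
  shows "card ((A - DK) \<union> (B \<inter> DK)) = card A - card (A \<inter> DK) + card (B \<inter> DK)"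
    and "card (A \<inter> DK) \<le> card A"
proof -
  have "card ((A - DK) \<union> (B \<inter> DK)) = card (A - DK) + card (B \<inter> DK)"
    using assms by (intro card_Un_disjoint) auto
  moreover have "card (A - DK) = card A - card (A \<inter> DK)"
    using assms by (simp add: card_Diff_subset_Int)
  ultimately show "card ((A - DK) \<union> (B \<inter> DK)) = card A - card (A \<inter> DK) + card (B \<inter> DK)" by simp
  show "card (A \<inter> DK) \<le> card A" using assms by (simp add: card_mono)
qed

lemma flip_eq:
  assumes fin: "finite W" and A: "maxW E W A" and B: "maxW E W B" and D: "D = (A - B) \<union> (B - A)"
    and K: "K = compset D W a"
  shows "card (A \<inter> {e\<in>D. e \<subseteq> K}) = card (B \<inter> {e\<in>D. e \<subseteq> K})"
proof -
  let ?DK = "{e\<in>D. e \<subseteq> K}"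
  have mA: "matchW E W A" and mB: "matchW E W B" using A B unfolding maxW_def by auto
  have fA: "finite A" and fB: "finite B" using matchW_finite fin mA mB by auto
  have m1: "matchW E W ((A - ?DK) \<union> (B \<inter> ?DK))" by (rule flip_match[OF mA mB D K])
  have D': "D = (B - A) \<union> (A - B)" using D by auto
  have m2: "matchW E W ((B - ?DK) \<union> (A \<inter> ?DK))" by (rule flip_match[OF mB mA D' K])
  have "card ((A - ?DK) \<union> (B \<inter> ?DK)) \<le> card A" using A m1 unfolding maxW_def by auto
  moreover have "card ((B - ?DK) \<union> (A \<inter> ?DK)) \<le> card B" using B m2 unfolding maxW_def by auto
  moreover have "card A = card B" using A B unfolding maxW_def by (simp add: le_antisym)
  ultimately show ?thesis using flip_card[OF fA fB, of ?DK] flip_card[OF fB fA, of ?DK] by linarith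
qed

lemma deg_le2:
  assumes A: "matchW E W A" and B: "matchW E W B" and D: "D = (A - B) \<union> (B - A)" and fin: "finite W"
  shows "card {e\<in>D. y \<in> e} \<le> 2"
proof -
  have fA: "finite A" and fB: "finite B" using matchW_finite fin A B by auto
  have "card {e\<in>A. y \<in> e} \<le> Suc 0"
    proof (subst card_le_Suc0_iff_eq)
    show "finite {e\<in>A. y \<in> e}" using fA by simp
    show "\<forall>a1\<in>{e\<in>A. y \<in> e}. \<forall>a2\<in>{e\<in>A. y \<in> e}. a1 = a2"
      using match_one[OF A] by blast
  qed
  moreover have "card {e\<in>B. y \<in> e} \<le> Suc 0"
  proof (subst card_le_Suc0_iff_eq)
    show "finite {e\<in>B. y \<in> e}" using fB by simp
    show "\<forall>a1\<in>{e\<in>B. y \<in> e}. \<forall>a2\<in>{e\<in>B. y \<in> e}. a1 = a2"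
      using match_one[OF B] by blast
  qed
  moreover have "{e\<in>D. y \<in> e} \<subseteq> {e\<in>A. y \<in> e} \<union> {e\<in>B. y \<in> e}" using D by auto
  moreover have "card ({e\<in>A. y \<in> e} \<union> {e\<in>B. y \<in> e}) \<le> card {e\<in>A. y \<in> e} + card {e\<in>B. y \<in> e}"
    by (rule card_Un_le)
  moreover have "finite ({e\<in>A. y \<in> e} \<union> {e\<in>B. y \<in> e})" using fA fB by auto
  ultimately show ?thesis by (smt (verit) add_le_mono card_mono le_trans numeral_2_eq_2 plus_1_eq_Suc One_nat_def)
qed

lemma deg_one:
  assumes A: "matchW E W A" and B: "matchW E W B" and D: "D = (A - B) \<union> (B - A)"
    and y: "\<not> cov A y" "cov B y"
  shows "card {e\<in>D. y \<in> e} = 1"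
proof -
  obtain e where e: "e \<in> B" "y \<in> e" using y unfolding cov_def by auto
  have "e \<notin> A" using y e unfolding cov_def by auto
  have "{e\<in>D. y \<in> e} = {e}"
  proof
    show "{e} \<subseteq> {e\<in>D. y \<in> e}" using e \<open>e \<notin> A\<close> D by auto
    show "{e\<in>D. y \<in> e} \<subseteq> {e}"
    proof
      fix f assume "f \<in> {e\<in>D. y \<in> e}"
      then have "f \<in> A \<or> f \<in> B" "y \<in> f" using D by auto
      then show "f \<in> {e}" using y(1) match_one[OF B _ e(1) _ e(2)] unfolding cov_def by auto
    qed
  qed
  then show ?thesis by simp
qed

end


context sg
begin

lemma path_in:
  assumes "(v,u) \<in> (adj_rel D W)\<^sup>*" "v \<in> compset D W a" "D \<subseteq> E" "\<forall>e\<in>D. e \<subseteq> W"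
  shows "u \<in> compset D W a \<and> (v,u) \<in> (adj_rel {e\<in>D. e \<subseteq> compset D W a} (compset D W a))\<^sup>*"
  using assms(1)
proof (induction rule: rtrancl_induct)
  case base then show ?case using assms(2) by simp
next
  case (step z u)
  then have z: "z \<in> compset D W a" by simp
  have e: "{z,u} \<in> D" "u \<in> W" using step(2) unfolding adj_rel_def by auto
  have "{z,u} \<subseteq> compset D W a" using comp_closed[OF z e(1)] e assms(3,4) by auto
  then have "(z,u) \<in> adj_rel {e\<in>D. e \<subseteq> compset D W a} (compset D W a)"
    using e unfolding adj_rel_def by auto
  then show ?case using step \<open>{z,u} \<subseteq> compset D W a\<close> by (auto intro: rtrancl_into_rtrancl)
qed

lemma three_ends:
  assumes fin: "finite W" and A: "matchW E W A" and B: "matchW E W B" and D: "D = (A - B) \<union> (B - A)"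
    and K: "K = compset D W a" and aW: "a \<in> W"
    and pqr: "p \<in> K" "q \<in> K" "r \<in> K" "p \<noteq> q" "p \<noteq> r" "q \<noteq> r"
    and d1: "card {e\<in>D. p \<in> e} = 1" "card {e\<in>D. q \<in> e} = 1" "card {e\<in>D. r \<in> e} = 1"
  shows False
proof -
  have AE: "A \<subseteq> E" "\<forall>e\<in>A. e \<subseteq> W" and BE: "B \<subseteq> E" "\<forall>e\<in>B. e \<subseteq> W"
    using A B unfolding matchW_def by auto
  have DE: "D \<subseteq> E" and DW: "\<forall>e\<in>D. e \<subseteq> W" using D AE BE by auto
  have fA: "finite A" and fB: "finite B" using matchW_finite fin A B by auto
  have fD: "finite D" using D fA fB by auto
  let ?DK = "{e\<in>D. e \<subseteq> K}"
  have fK: "finite K" using K compset_sub fin finite_subset by metis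
  have fDK: "finite ?DK" using fD by simp
  have conn: "compsW ?DK K = {K}"
  proof -
    have "compset ?DK K v = K" if "v \<in> K" for v
    proof
      show "compset ?DK K v \<subseteq> K" by (rule compset_sub)
      show "K \<subseteq> compset ?DK K v"
      proof
        fix u assume "u \<in> K"
        then have "(v,u) \<in> (adj_rel D W)\<^sup>*" using \<open>v \<in> K\<close> K unfolding compset_def
          by (auto dest: rt_sym intro: rtrancl_trans)
        then have "(v,u) \<in> (adj_rel ?DK K)\<^sup>*" using path_in[of v u D W a] \<open>v \<in> K\<close> K DE DW by auto
        then show "u \<in> compset ?DK K v" using \<open>u \<in> K\<close> unfolding compset_def by auto
      qed
    qed
    moreover have "K \<noteq> {}" using pqr by auto
    ultimately show ?thesis unfolding compsW_def by auto
  qed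
  have "card K \<le> card ?DK + card (compsW ?DK K)"
  proof (rule comp_count[OF fK fDK])
    show "\<forall>e\<in>?DK. \<exists>x y. e = {x,y} \<and> x \<noteq> y \<and> x \<in> K \<and> y \<in> K"
    proof
      fix e assume e: "e \<in> ?DK"
      then obtain x y where xy: "e = {x,y}" "x \<noteq> y" using two DE by blast
      then have "x \<in> K" "y \<in> K" using e by auto
      then show "\<exists>x y. e = {x,y} \<and> x \<noteq> y \<and> x \<in> K \<and> y \<in> K" using xy by blast
    qed
  qed
  then have c1: "card K \<le> card ?DK + 1" using conn by simp
  have hs: "(\<Sum>y\<in>K. card {e\<in>?DK. y \<in> e}) = 2 * card ?DK"
    by (rule handshake[OF fK fDK]) (use card_edge DE in auto)
  have loc: "{e\<in>?DK. y \<in> e} = {e\<in>D. y \<in> e}" if "y \<in> K" for y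
    using comp_closed[of y D W a] that K DE DW by auto
  define f where "f y = card {e\<in>D. y \<in> e}" for y
  have f2: "f y \<le> 2" for y unfolding f_def by (rule deg_le2[OF A B D fin])
  have s1: "(\<Sum>y\<in>K. card {e\<in>?DK. y \<in> e}) = (\<Sum>y\<in>K. f y)"
    using loc unfolding f_def by simp
  have pK: "{p,q,r} \<subseteq> K" using pqr by simp
  have s2: "(\<Sum>y\<in>K. f y) = (\<Sum>y\<in>K - {p,q,r}. f y) + (\<Sum>y\<in>{p,q,r}. f y)"
    by (rule sum.subset_diff[OF pK fK])
  have s3: "(\<Sum>y\<in>{p,q,r}. f y) = 3" using pqr d1 unfolding f_def by simp
  have s4: "(\<Sum>y\<in>K - {p,q,r}. f y) \<le> 2 * card (K - {p,q,r})"
    using sum_bounded_above[of "K - {p,q,r}" f 2] f2 by simp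
  have s5: "card (K - {p,q,r}) = card K - 3"
    using pqr fK by (simp add: card_Diff_subset)
  have "2 * card ?DK \<le> 3 + 2 * (card K - 3)" using hs s1 s2 s3 s4 s5 by linarith
  moreover have "card K \<ge> 3"
  proof -
    have "card {p,q,r} \<le> card K" using pqr fK by (intro card_mono) auto
    then show ?thesis using pqr by simp
  qed
  ultimately show False using c1 by linarith
qed

lemma flip_miss:
  assumes fin: "finite W" and A: "maxW E W A" and B: "maxW E W B" and D: "D = (A - B) \<union> (B - A)"
    and y: "\<not> cov A y" "cov B y" and c: "\<not> cov B c" "c \<notin> compset D W y"
  shows "\<exists>M. maxW E W M \<and> \<not> cov M y \<and> \<not> cov M c"
proof -
  let ?K = "compset D W y"
  let ?DK = "{e\<in>D. e \<subseteq> ?K}"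
  let ?M = "(B - ?DK) \<union> (A \<inter> ?DK)"
  have mA: "matchW E W A" and mB: "matchW E W B" using A B unfolding maxW_def by auto
  have AE: "A \<subseteq> E" "\<forall>e\<in>A. e \<subseteq> W" and BE: "B \<subseteq> E" "\<forall>e\<in>B. e \<subseteq> W"
    using mA mB unfolding matchW_def by auto
  have DE: "D \<subseteq> E" and DW: "\<forall>e\<in>D. e \<subseteq> W" using D AE BE by auto
  have fA: "finite A" and fB: "finite B" using matchW_finite fin mA mB by auto
  have D': "D = (B - A) \<union> (A - B)" using D by auto
  have m: "matchW E W ?M" by (rule flip_match[OF mB mA D' refl])
  have eq: "card (B \<inter> ?DK) = card (A \<inter> ?DK)" by (rule flip_eq[OF fin B A D' refl])
  have "card ?M = card B" using flip_card[OF fB fA, of ?DK] eq by simp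
  then have mx: "maxW E W ?M" using m B unfolding maxW_def by auto
  obtain e where e: "e \<in> B" "y \<in> e" using y unfolding cov_def by auto
  have yW: "y \<in> W" using e BE by auto
  have yK: "y \<in> ?K" using compset_self yW by metis
  have "e \<notin> A" using e y unfolding cov_def by auto
  then have eD: "e \<in> D" using e D by auto
  have "e \<subseteq> ?K" using comp_closed[OF yK eD _ e(2) DE] DW eD by blast
  have ny: "\<not> cov ?M y"
  proof
    assume "cov ?M y"
    then obtain f where f: "f \<in> ?M" "y \<in> f" unfolding cov_def by auto
    show False
    proof (cases "f \<in> B")
      case True
      have "f = e" by (rule match_one[OF mB True e(1) f(2) e(2)])
      then show False using f \<open>e \<subseteq> ?K\<close> eD \<open>e \<notin> A\<close> by auto
    next
      case False
      then have "f \<in> A" using f by auto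
      then show False using y f unfolding cov_def by auto
    qed
  qed
  have nc: "\<not> cov ?M c"
  proof
    assume "cov ?M c"
    then obtain f where f: "f \<in> ?M" "c \<in> f" unfolding cov_def by auto
    show False
    proof (cases "f \<in> B")
      case True
      then show False using c f unfolding cov_def by auto
    next
      case False
      then have "f \<subseteq> ?K" using f by auto
      then show False using f c by auto
    qed
  qed
  show ?thesis using mx ny nc by blast
qed

lemma SW:
  assumes fin: "finite W" and A: "maxW E W A" and B: "maxW E W B"
    and abc: "a \<noteq> b" "a \<noteq> c" "b \<noteq> c"
    and cv: "\<not> cov A a" "\<not> cov A b" "cov B a" "cov B b" "cov A c" "\<not> cov B c"
  shows "\<exists>M. maxW E W M \<and> \<not> cov M c \<and> (\<not> cov M a \<or> \<not> cov M b)"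
proof -
  define D where "D = (A - B) \<union> (B - A)"
  have mA: "matchW E W A" and mB: "matchW E W B" using A B unfolding maxW_def by auto
  have W: "a \<in> W" "b \<in> W" "c \<in> W" using cv mA mB unfolding cov_def matchW_def by auto
  show ?thesis
  proof (cases "c \<in> compset D W a \<and> c \<in> compset D W b")
    case False
    then show ?thesis using flip_miss[OF fin A B D_def] cv by blast
  next
    case True
    have "compset D W b = compset D W a"
      using True compset_eq by metis
    then have bK: "b \<in> compset D W a" using compset_self W by metis
    have aK: "a \<in> compset D W a" using compset_self W by metis
    have "card {e\<in>D. a \<in> e} = 1" by (rule deg_one[OF mA mB D_def cv(1,3)])
    moreover have "card {e\<in>D. b \<in> e} = 1" by (rule deg_one[OF mA mB D_def cv(2,4)])
    moreover have D': "D = (B - A) \<union> (A - B)" using D_def by auto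
    moreover have "card {e\<in>D. c \<in> e} = 1" by (rule deg_one[OF mB mA D' cv(6,5)])
    ultimately have False
      using three_ends[OF fin mA mB D_def refl W(1) aK bK _ abc] True by blast
    then show ?thesis ..
  qed
qed

end


context sg
begin

lemma KC:
  assumes fin: "finite W" and Bh: "\<forall>v\<in>W. \<exists>M. maxW E W M \<and> \<not> cov M v"
  shows "\<not> (\<exists>M u v. maxW E W M \<and> u \<in> W \<and> v \<in> W \<and> u \<noteq> v \<and> \<not> cov M u \<and> \<not> cov M v
            \<and> (u,v) \<in> adj_rel E W ^^ d)"
proof (induction d rule: less_induct)
  case (less d)
  show ?case
  proof
    assume "\<exists>M u v. maxW E W M \<and> u \<in> W \<and> v \<in> W \<and> u \<noteq> v \<and> \<not> cov M u \<and> \<not> cov M v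
            \<and> (u,v) \<in> adj_rel E W ^^ d"
    then obtain M u v where H: "maxW E W M" "u \<in> W" "v \<in> W" "u \<noteq> v" "\<not> cov M u" "\<not> cov M v"
      "(u,v) \<in> adj_rel E W ^^ d" by blast
    show False
    proof (cases d)
      case 0
      then show False using H by simp
    next
      case (Suc d')
      then obtain w where uw: "(u,w) \<in> adj_rel E W" and wv: "(w,v) \<in> adj_rel E W ^^ d'"
        using H(7) relpow_Suc_E2 by metis
      have wW: "w \<in> W" using uw unfolding adj_rel_def by auto
      have uw_ne: "u \<noteq> w" using adj_neq uw by blast
      have wv_ne: "w \<noteq> v"
      proof
        assume "w = v"
        then show False using aug[OF fin H(1,5,6)] uw by simp
      qed
      have cMw: "cov M w" using aug[OF fin H(1,5), of w] uw by blast
      obtain M2 where M2: "maxW E W M2" "\<not> cov M2 w" using Bh wW by blast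
      have c2u: "cov M2 u"
      proof (rule ccontr)
        assume "\<not> cov M2 u"
        then show False using aug[OF fin M2(1) _ M2(2)] uw by blast
      qed
      have dl: "d' < d" using Suc by simp
      have c2v: "cov M2 v"
      proof (rule ccontr)
        assume "\<not> cov M2 v"
        then show False using less.IH[OF dl] M2 wW H(3) wv_ne wv by blast
      qed
      obtain M3 where M3: "maxW E W M3" "\<not> cov M3 w" "\<not> cov M3 u \<or> \<not> cov M3 v"
        using SW[OF fin H(1) M2(1) H(4) uw_ne wv_ne[symmetric] H(5,6) c2u c2v cMw M2(2)] by blast
      show False
      proof (cases "cov M3 u")
        case False
        then show False using aug[OF fin M3(1) _ M3(2)] uw by blast
      next
        case True
        then have "\<not> cov M3 v" using M3 by blast
        then show False using less.IH[OF dl] M3 wW H(3) wv_ne wv by blast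
      qed
    qed
  qed
qed

lemma TB:
  assumes "finite W" "\<forall>M. matchW E W M \<longrightarrow> card M \<le> s"
  shows "\<exists>X \<subseteq> W. card X + (\<Sum>C\<in>compsW E (W - X). card C div 2) \<le> s"
  using assms
proof (induction "card W" arbitrary: W s rule: less_induct)
  case less
  have fin: "finite W" using less by simp
  obtain M0 where M0: "maxW E W M0" using ex_maxW[OF fin] by blast
  define \<nu> where "\<nu> = card M0"
  have \<nu>s: "\<nu> \<le> s" using less.prems M0 unfolding maxW_def \<nu>_def by auto
  show ?case
  proof (cases "\<exists>v\<in>W. \<forall>M. maxW E W M \<longrightarrow> cov M v")
    case True
    then obtain v where v: "v \<in> W" "\<And>M. maxW E W M \<Longrightarrow> cov M v" by blast
    have \<nu>1: "\<nu> \<ge> 1"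
    proof (rule ccontr)
      assume "\<not> \<nu> \<ge> 1"
      then have "\<nu> = 0" by simp
      then have "maxW E W {}" using M0 unfolding maxW_def matchW_def \<nu>_def by auto
      then show False using v(2) unfolding cov_def by blast
    qed
    define W' where "W' = W - {v}"
    have finW': "finite W'" using fin W'_def by simp
    have cW': "card W' < card W" unfolding W'_def by (rule card_Diff1_less[OF fin v(1)])
    have bound': "\<forall>M. matchW E W' M \<longrightarrow> card M \<le> \<nu> - 1"
    proof (intro allI impI)
      fix M assume m: "matchW E W' M"
      then have mW: "matchW E W M" unfolding matchW_def W'_def by auto
      then have le: "card M \<le> \<nu>" using M0 unfolding maxW_def \<nu>_def by auto
      have "card M \<noteq> \<nu>"
      proof
        assume "card M = \<nu>"
        then have "maxW E W M" using mW M0 unfolding maxW_def \<nu>_def by auto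
        then have "cov M v" by (rule v(2))
        then show False using m unfolding cov_def matchW_def W'_def by auto
      qed
      then show "card M \<le> \<nu> - 1" using le by simp
    qed
    obtain X' where X': "X' \<subseteq> W'" "card X' + (\<Sum>C\<in>compsW E (W' - X'). card C div 2) \<le> \<nu> - 1"
      using less.hyps[OF cW' finW' bound'] by blast
    define X where "X = insert v X'"
    have XW: "X \<subseteq> W" using X' v W'_def X_def by auto
    have WX: "W - X = W' - X'" using W'_def X_def by auto
    have cX: "card X = card X' + 1"
    proof -
      have "v \<notin> X'" using X'(1) W'_def by auto
      moreover have "finite X'" using X'(1) finW' finite_subset by blast
      ultimately show ?thesis unfolding X_def by simp
    qed
    have "card X + (\<Sum>C\<in>compsW E (W - X). card C div 2)
          = card X' + (\<Sum>C\<in>compsW E (W' - X'). card C div 2) + 1" using WX cX by simp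
    also have "\<dots> \<le> s" using X'(2) \<nu>1 \<nu>s by linarith
    finally show ?thesis using XW by blast
  next
    case False
    then have Bh: "\<forall>v\<in>W. \<exists>M. maxW E W M \<and> \<not> cov M v" by blast
    have mM: "matchW E W M0" using M0 unfolding maxW_def by auto
    have fM: "finite M0" using matchW_finite fin mM by blast
    have ME: "M0 \<subseteq> E" using mM unfolding matchW_def by auto
    define MC where "MC C = {e\<in>M0. e \<subseteq> C}" for C
    have fC: "finite (compsW E W)" using compsW_finite fin by blast
    have a: "card C div 2 \<le> card (MC C)" if C: "C \<in> compsW E W" for C
    proof -
      define U where "U = \<Union>(MC C)"
      have fMC: "finite (MC C)" using fM unfolding MC_def by simp
      have cU: "card U = 2 * card (MC C)"
      proof -
        have fe: "\<forall>e\<in>M0. finite e" using card_edge ME by (metis card.infinite zero_neq_numeral subsetD)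
        have "card U = (\<Sum>e\<in>MC C. card e)" unfolding U_def
          using fMC ME mM card_edge fe unfolding MC_def matchW_def
          by (subst card_Union_disjoint) (auto simp: pairwise_def disjnt_def card_eq_0_iff)
        also have "\<dots> = (\<Sum>e\<in>MC C. 2)" using card_edge ME unfolding MC_def by (intro sum.cong) auto
        finally show ?thesis by simp
      qed
      have CW: "C \<subseteq> W" using compsW_sub C by blast
      have fCC: "finite C" using CW fin finite_subset by blast
      have notcov: "\<not> cov M0 x" if "x \<in> C - U" for x
      proof
        assume "cov M0 x"
        then obtain e where e: "e \<in> M0" "x \<in> e" unfolding cov_def by auto
        obtain p q where pq: "e = {p,q}" using two e ME by blast
        have eW: "e \<subseteq> W" using mM e unfolding matchW_def by auto
        have "e \<subseteq> C"
        proof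
          fix z assume "z \<in> e"
          then have "z = x \<or> {x,z} \<in> E" using pq e ME by (auto simp: insert_commute)
          then show "z \<in> C" using compsW_edge[OF C, of x z] that eW \<open>z \<in> e\<close> by auto
        qed
        then have "x \<in> U" using e unfolding U_def MC_def by auto
        then show False using that by auto
      qed
      have "card (C - U) \<le> Suc 0"
      proof (subst card_le_Suc0_iff_eq)
        show "finite (C - U)" using fCC by simp
        show "\<forall>x\<in>C - U. \<forall>y\<in>C - U. x = y"
        proof (intro ballI, rule ccontr)
          fix x y assume xy: "x \<in> C - U" "y \<in> C - U" "x \<noteq> y"
          obtain v0 where "v0 \<in> W" "C = compset E W v0" using C unfolding compsW_def by auto
          then have "(x,y) \<in> (adj_rel E W)\<^sup>*" using xy unfolding compset_def
            by (auto dest: rt_sym intro: rtrancl_trans)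
          then obtain d where "(x,y) \<in> adj_rel E W ^^ d" using rtrancl_power by blast
          then show False using KC[OF fin Bh, of d] M0 notcov xy CW by blast
        qed
      qed
      moreover have "card C \<le> card U + card (C - U)"
      proof -
        have UC: "U \<subseteq> C" unfolding U_def MC_def by auto
        then have "card U \<le> card C" using fCC by (simp add: card_mono)
        then show ?thesis using fCC UC by (simp add: card_Diff_subset finite_subset)
      qed
      ultimately show ?thesis using cU by linarith
    qed
    have b: "(\<Sum>C\<in>compsW E W. card (MC C)) \<le> card M0"
    proof -
      have "(\<Sum>C\<in>compsW E W. card (MC C)) = card (\<Union>C\<in>compsW E W. MC C)"
      proof (rule card_UN_disjoint[symmetric])
        show "finite (compsW E W)" by (rule fC)
        show "\<forall>C\<in>compsW E W. finite (MC C)" using fM unfolding MC_def by simp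
        show "\<forall>C\<in>compsW E W. \<forall>C'\<in>compsW E W. C \<noteq> C' \<longrightarrow> MC C \<inter> MC C' = {}"
        proof (intro ballI impI)
          fix C C' assume CC: "C \<in> compsW E W" "C' \<in> compsW E W" "C \<noteq> C'"
          show "MC C \<inter> MC C' = {}"
          proof (rule ccontr)
            assume "MC C \<inter> MC C' \<noteq> {}"
            then obtain e where e: "e \<in> M0" "e \<subseteq> C" "e \<subseteq> C'" unfolding MC_def by auto
            have "card e = 2" using card_edge e ME by auto
            then obtain z where "z \<in> e" by (metis card.empty ex_in_conv zero_neq_numeral)
            then show False using compsW_disj[OF CC(1,2)] e CC(3) by blast
          qed
        qed
      qed
      also have "\<dots> \<le> card M0" using fM unfolding MC_def by (intro card_mono) auto
      finally show ?thesis .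
    qed
    have "(\<Sum>C\<in>compsW E (W - {}). card C div 2) \<le> (\<Sum>C\<in>compsW E W. card (MC C))"
      using a by (simp add: sum_mono)
    then have "card ({}::nat set) + (\<Sum>C\<in>compsW E (W - {}). card C div 2) \<le> s"
      using b \<nu>s \<nu>_def by simp
    then show ?thesis by blast
  qed
qed

end


definition nb :: "nat set set \<Rightarrow> nat set \<Rightarrow> nat \<Rightarrow> nat set" where
  "nb E S w = {u\<in>S. {u,w} \<in> E}"

lemma card_filter_sum: "finite A \<Longrightarrow> card {x\<in>A. P x} = (\<Sum>x\<in>A. if P x then 1 else 0)"
  by (simp add: sum.If_cases Int_def)

lemma count_lemma:
  assumes g: "is_graph n E" and nk: "\<not> contains_Klt n E l t" and t1: "1 \<le> t"
    and S: "S \<subseteq> {0..<n}" and W: "W \<subseteq> {0..<n}"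
  shows "(\<Sum>w\<in>W. card (nb E S w) choose l) \<le> (t - 1) * (card S choose l)"
proof -
  have fS: "finite S" using S finite_subset by blast
  have fW: "finite W" using W finite_subset by blast
  define Sub where "Sub = {T. T \<subseteq> S \<and> card T = l}"
  have fSub: "finite Sub" unfolding Sub_def using fS by simp
  have cSub: "card Sub = card S choose l" unfolding Sub_def by (rule n_subsets[OF fS])
  have eq1: "card (nb E S w) choose l = (\<Sum>T\<in>Sub. if T \<subseteq> nb E S w then 1 else 0)" for w
  proof -
    have "card (nb E S w) choose l = card {T. T \<subseteq> nb E S w \<and> card T = l}"
      using fS unfolding nb_def by (simp add: n_subsets)
    also have "{T. T \<subseteq> nb E S w \<and> card T = l} = {T\<in>Sub. T \<subseteq> nb E S w}"
      unfolding Sub_def nb_def by auto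
    also have "card \<dots> = (\<Sum>T\<in>Sub. if T \<subseteq> nb E S w then 1 else 0)"
      by (rule card_filter_sum[OF fSub])
    finally show ?thesis .
  qed
  have "(\<Sum>w\<in>W. card (nb E S w) choose l) = (\<Sum>w\<in>W. \<Sum>T\<in>Sub. if T \<subseteq> nb E S w then 1 else 0)"
    using eq1 by simp
  also have "\<dots> = (\<Sum>T\<in>Sub. \<Sum>w\<in>W. if T \<subseteq> nb E S w then 1 else 0)" by (rule sum.swap)
  also have "\<dots> \<le> (\<Sum>T\<in>Sub. t - 1)"
  proof (rule sum_mono)
    fix T assume T: "T \<in> Sub"
    have "(\<Sum>w\<in>W. if T \<subseteq> nb E S w then 1 else 0) = card {w\<in>W. T \<subseteq> nb E S w}"
      by (rule card_filter_sum[OF fW, symmetric])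
    also have "\<dots> \<le> t - 1"
    proof (rule ccontr)
      assume "\<not> card {w\<in>W. T \<subseteq> nb E S w} \<le> t - 1"
      then have "t \<le> card {w\<in>W. T \<subseteq> nb E S w}" by simp
      then obtain B where B: "B \<subseteq> {w\<in>W. T \<subseteq> nb E S w}" "card B = t"
        by (meson obtain_subset_with_card_n)
      have disj: "T \<inter> B = {}"
      proof (rule ccontr)
        assume "T \<inter> B \<noteq> {}"
        then obtain w where w: "w \<in> T" "w \<in> B" by auto
        then have "T \<subseteq> nb E S w" using B by auto
        then have "w \<in> nb E S w" using w by auto
        then have "{w} \<in> E" unfolding nb_def by simp
        then obtain u v where "{w} = {u,v}" "u \<noteq> v" using g unfolding is_graph_def by blast
        then show False by (metis insertCI singletonD)
      qed
      have "contains_Klt n E l t"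
        unfolding contains_Klt_def
      proof (intro exI conjI)
        show "T \<subseteq> {0..<n}" using T S unfolding Sub_def by auto
        show "B \<subseteq> {0..<n}" using B W by auto
        show "T \<inter> B = {}" by (rule disj)
        show "card T = l" using T unfolding Sub_def by simp
        show "card B = t" by (rule B(2))
        show "\<forall>a\<in>T. \<forall>b\<in>B. {a, b} \<in> E" using B unfolding nb_def by auto
      qed
      then show False using nk by simp
    qed
    finally show "(\<Sum>w\<in>W. if T \<subseteq> nb E S w then 1 else 0) \<le> t - 1" .
  qed
  also have "\<dots> = (t - 1) * (card S choose l)" using cSub by simp
  finally show ?thesis .
qed

lemma dlin_aux: assumes "l \<ge> 1" "l \<le> d" shows "d - l + 1 \<le> d choose l"
  using assms(2)
proof (induction d rule: dec_induct)
  case base then show ?case by simp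
next
  case (step m)
  obtain k where k: "l = Suc k" using assms(1) by (metis Suc_le_D One_nat_def)
  have "Suc m choose l = (m choose k) + (m choose l)" using k by simp
  moreover have "0 < m choose k" using k step.hyps by simp
  ultimately show ?case using step.IH step.hyps by linarith
qed

lemma dlin: "l \<ge> 1 \<Longrightarrow> d \<le> (l - 1) + (d choose l)"
  using dlin_aux[of l d] by (cases "l \<le> d") auto

lemma cs_nat:
  fixes a :: "nat \<Rightarrow> nat"
  assumes "finite A"
  shows "(\<Sum>i\<in>A. a i)^2 \<le> card A * (\<Sum>i\<in>A. (a i)^2)"
proof -
  have key: "2 * (x * y) \<le> x^2 + y^2" for x y :: nat
  proof -
    have "int (2 * (x * y)) \<le> int (x^2 + y^2)"
      using power2_diff[of "int x" "int y"] zero_le_power2[of "int x - int y"] by simp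
    then show ?thesis by linarith
  qed
  have "(\<Sum>i\<in>A. a i)^2 = (\<Sum>i\<in>A. \<Sum>j\<in>A. a i * a j)"
    by (simp add: power2_eq_square sum_product)
  then have "2 * (\<Sum>i\<in>A. a i)^2 = (\<Sum>i\<in>A. \<Sum>j\<in>A. 2 * (a i * a j))"
    by (simp add: sum_distrib_left)
  also have "\<dots> \<le> (\<Sum>i\<in>A. \<Sum>j\<in>A. (a i)^2 + (a j)^2)"
    by (intro sum_mono key)
  also have "\<dots> = (\<Sum>i\<in>A. card A * (a i)^2) + (\<Sum>i\<in>A. card A * (a i)^2)"
    by (simp add: sum.distrib sum.swap[of _ A A] sum_distrib_left)
  also have "\<dots> = 2 * (card A * (\<Sum>i\<in>A. (a i)^2))"
    by (simp only: sum_distrib_left[symmetric])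
  finally show ?thesis by simp
qed


lemma binom_shift: "2 \<le> r \<Longrightarrow> r \<le> m \<Longrightarrow> (m - r + 2) choose 2 \<le> m choose r"
proof (induction r arbitrary: m rule: dec_induct)
  case base
  then have "m - 2 + 2 = m" by simp
  then show ?case by simp
next
  case (step r m)
  obtain m' where m: "m = Suc m'" using step.prems by (cases m) auto
  have "m' - r + 2 choose 2 \<le> m' choose r" using step.IH[of m'] step.prems m by simp
  moreover have "m - Suc r + 2 = m' - r + 2" using m by simp
  moreover have "m' choose r \<le> m choose Suc r" using m by simp
  ultimately show ?case by simp
qed

lemma Dbound:
  assumes "3 \<le> l" "k + l \<le> s"
  shows "k^3 + 6*k^2 + 11*k + 6 * ((s-k) choose l) \<le> 6 * (s choose l)"
  using assms(2)
proof (induction k arbitrary: s)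
  case 0 then show ?case by simp
next
  case (Suc k)
  obtain s' where s: "s = Suc s'" using Suc.prems by (cases s) auto
  obtain l' where l: "l = Suc l'" using assms(1) by (cases l) auto
  have IH: "k^3 + 6*k^2 + 11*k + 6 * ((s'-k) choose l) \<le> 6 * (s' choose l)"
    using Suc.IH[of s'] Suc.prems s by simp
  have pas: "s choose l = (s' choose l') + (s' choose l)" using s l by simp
  have "(s' - l' + 2) choose 2 \<le> s' choose l'"
    by (rule binom_shift) (use assms(1) l Suc.prems s in auto)
  moreover have "(k+3) choose 2 \<le> (s' - l' + 2) choose 2"
    by (rule binomial_right_mono) (use Suc.prems s l in auto)
  ultimately have b: "(k+3) choose 2 \<le> s' choose l'" by simp
  have c2: "2 * ((k+3) choose 2) = (k+3)*(k+2)"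
    by (simp add: choose_two)
  have eq: "s - Suc k = s' - k" using s by simp
  have "(Suc k)^3 + 6*(Suc k)^2 + 11*(Suc k) = k^3 + 6*k^2 + 11*k + 3*((k+3)*(k+2))"
    by (simp add: power3_eq_cube power2_eq_square algebra_simps)
  then show ?case using IH pas b c2 eq by simp
qed

lemma l3final:
  assumes "3 \<le> l" "l \<le> t" "k + l \<le> s"
  shows "4*k^2 + 2*k + (l-1)*k \<le> 2*(t-1)*((s choose l) - ((s-k) choose l))"
proof -
  define D where "D = (s choose l) - ((s-k) choose l)"
  have "k^3 + 6*k^2 + 11*k + 6 * ((s-k) choose l) \<le> 6 * (s choose l)" by (rule Dbound[OF assms(1,3)])
  then have "k^3 + 6*k^2 + 11*k \<le> 6 * D" unfolding D_def by simp
  then have kD: "k^2 + k \<le> D" by (simp add: power2_eq_square power3_eq_cube)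
  have kD2: "k \<le> D" using kD by simp
  obtain j where j: "l = j + 3" using assms(1) by (metis add.commute le_Suc_ex)
  have e1: "4*k^2 + 2*k + (l-1)*k = 4*(k^2+k) + j*k" using j by (simp add: algebra_simps)
  have "4*(k^2+k) + j*k \<le> 4*D + j*D" using kD kD2 by (intro add_le_mono mult_le_mono) auto
  also have "\<dots> \<le> 2*(j+2)*D" by (simp add: algebra_simps)
  also have "\<dots> \<le> 2*(t-1)*D" using assms(2) j by (intro mult_le_mono) auto
  finally show ?thesis unfolding D_def using e1 by simp
qed


lemma two_choose2: "2 * (n choose 2) = n * (n - 1)"
proof (induction n)
  case 0 then show ?case by simp
next
  case (Suc n)
  have "Suc n choose 2 = n + (n choose 2)"
    by (simp add: numeral_2_eq_2)
  then show ?case using Suc by (cases n) (auto simp: algebra_simps)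
qed

lemma l2final:
  assumes "2 \<le> t" "k + 2 \<le> s"
  shows "k*s + k \<le> 2*(t-1)*((s choose 2) - ((s-k) choose 2))"
proof -
  obtain m where s: "s = k + m + 2" using assms(2) by (metis add.commute add.left_commute le_iff_add)
  have sk: "s - k = m + 2" using s by simp
  have le: "(m+2) choose 2 \<le> s choose 2" using s by (intro binomial_right_mono) simp
  have e1: "2 * (s choose 2) = (k+m+2)*(k+m+1)" using two_choose2[of s] s by simp
  have e2: "2 * ((m+2) choose 2) = (m+2)*(m+1)" using two_choose2[of "m+2"] by simp
  have "k*s + k + (m+2)*(m+1) \<le> (k+m+2)*(k+m+1)" using s by (simp add: algebra_simps)
  then have "k*s + k \<le> 2*((s choose 2) - ((s-k) choose 2))"
    using e1 e2 le sk by (simp add: diff_mult_distrib2)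
  also have "\<dots> \<le> 2*(t-1)*((s choose 2) - ((s-k) choose 2))"
    using assms(1) by (intro mult_le_mono) auto
  finally show ?thesis .
qed

lemma kst_arith:
  fixes D c f s t :: nat
  assumes H: "D*D \<le> (t-1)*c^3 + c*D" and c: "c \<le> 2*f+1" and f1: "1 \<le> f" and fs: "f \<le> s"
    and s0: "27*(t-1)+4 \<le> s"
  shows "D \<le> f*s"
proof (rule ccontr)
  assume "\<not> D \<le> f*s"
  then have Dg: "f*s < D" by simp
  have c3: "c \<le> 3*f" using c f1 by simp
  have s3: "3 \<le> s" using s0 by simp
  have "3*f \<le> f*s" using s3 by simp
  then have cD: "c \<le> D" using c3 Dg by linarith
  have "D*(D-c) = D*D - c*D" by (simp add: diff_mult_distrib2 mult.commute)
  also have "\<dots> \<le> (t-1)*c^3" using H by simp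
  also have "\<dots> \<le> (t-1)*(3*f)^3" using c3 by (intro mult_le_mono power_mono) auto
  finally have up: "D*(D-c) \<le> 27*(t-1)*(f*f*f)" by (simp add: power3_eq_cube algebra_simps)
  have "f*s - 3*f \<le> D - c" using Dg c3 by simp
  then have "(f*s)*(f*s - 3*f) \<le> D*(D-c)" using Dg by (intro mult_le_mono) auto
  moreover have "(f*s)*(f*s - 3*f) = (f*f)*(s*(s-3))" by (simp add: diff_mult_distrib2 algebra_simps)
  ultimately have "(f*f)*(s*(s-3)) \<le> (f*f)*(27*(t-1)*f)" using up by (simp add: algebra_simps)
  then have "s*(s-3) \<le> 27*(t-1)*f" using f1 by simp
  also have "\<dots> \<le> 27*(t-1)*s" using fs by simp
  finally have "s*(s-3) \<le> s*(27*(t-1))" by (simp add: algebra_simps)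
  then have "s - 3 \<le> 27*(t-1)" using s3 by simp
  then show False using s0 by simp
qed


lemma nb_card_edges:
  assumes g: "is_graph n E" and y: "y < n"
  shows "card {e\<in>E. y \<in> e} = card (nb E {0..<n} y)"
proof -
  have inj: "inj_on (\<lambda>u. {u,y}) (nb E {0..<n} y)"
  proof (rule inj_onI)
    fix u u' assume uu: "u \<in> nb E {0..<n} y" "u' \<in> nb E {0..<n} y" "{u,y} = {u',y}"
    have "u \<noteq> y"
    proof
      assume "u = y"
      then have "{y} \<in> E" using uu unfolding nb_def by simp
      then obtain p q where "{y} = {p,q}" "p \<noteq> q" using g unfolding is_graph_def by blast
      then show False by (metis insertCI singletonD)
    qed
    then show "u = u'" using uu(3) by (metis doubleton_eq_iff)
  qed
  have img: "(\<lambda>u. {u,y}) ` (nb E {0..<n} y) = {e\<in>E. y \<in> e}"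
  proof
    show "(\<lambda>u. {u,y}) ` (nb E {0..<n} y) \<subseteq> {e\<in>E. y \<in> e}" unfolding nb_def by auto
    show "{e\<in>E. y \<in> e} \<subseteq> (\<lambda>u. {u,y}) ` (nb E {0..<n} y)"
    proof
      fix e assume e: "e \<in> {e\<in>E. y \<in> e}"
      then obtain p q where pq: "e = {p,q}" "p \<noteq> q" "p < n" "q < n" using g unfolding is_graph_def by blast
      show "e \<in> (\<lambda>u. {u,y}) ` (nb E {0..<n} y)"
      proof (cases "y = p")
        case True
        then have "e = {q,y}" using pq by auto
        then show ?thesis using e pq unfolding nb_def by auto
      next
        case False
        then have "y = q" using e pq by auto
        then show ?thesis using e pq unfolding nb_def by auto
      qed
    qed
  qed
  show ?thesis using card_image[OF inj] img by simp
qed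

lemma twoE:
  assumes g: "is_graph n E"
  shows "2 * card E = (\<Sum>w\<in>{0..<n}. card (nb E {0..<n} w))"
proof -
  have fE: "finite E"
  proof -
    have "E \<subseteq> Pow {0..<n}" using g unfolding is_graph_def by auto
    then show ?thesis by (meson finite_Pow_iff finite_atLeastLessThan finite_subset)
  qed
  have "(\<Sum>y\<in>{0..<n}. card {e\<in>E. y \<in> e}) = 2 * card E"
  proof (rule handshake[OF _ fE])
    show "finite {0..<n}" by simp
    show "\<forall>e\<in>E. card e = 2 \<and> e \<subseteq> {0..<n}" using g unfolding is_graph_def by auto
  qed
  then show ?thesis using nb_card_edges[OF g] by simp
qed

lemma nb_split:
  assumes "finite V" "X \<subseteq> V"
  shows "card (nb E V w) = card (nb E X w) + card (nb E (V - X) w)"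
proof -
  have "nb E V w = nb E X w \<union> nb E (V - X) w" using assms unfolding nb_def by auto
  moreover have "nb E X w \<inter> nb E (V - X) w = {}" unfolding nb_def by auto
  moreover have "finite (nb E X w)" "finite (nb E (V - X) w)"
    using assms unfolding nb_def by (auto intro: finite_subset)
  ultimately show ?thesis by (simp add: card_Un_disjoint)
qed

lemma nb_swap:
  assumes "finite A" "finite B"
  shows "(\<Sum>w\<in>A. card (nb E B w)) = (\<Sum>w\<in>B. card (nb E A w))"
proof -
  have "(\<Sum>w\<in>A. card (nb E B w)) = (\<Sum>w\<in>A. \<Sum>u\<in>B. if {u,w} \<in> E then 1 else 0)"
    unfolding nb_def using assms by (simp add: card_filter_sum)
  also have "\<dots> = (\<Sum>u\<in>B. \<Sum>w\<in>A. if {u,w} \<in> E then 1 else 0)" by (rule sum.swap)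
  also have "\<dots> = (\<Sum>u\<in>B. \<Sum>w\<in>A. if {w,u} \<in> E then 1 else 0)" by (simp add: insert_commute)
  also have "\<dots> = (\<Sum>w\<in>B. card (nb E A w))"
    unfolding nb_def using assms by (simp add: card_filter_sum)
  finally show ?thesis .
qed

lemma nb_le: "finite C \<Longrightarrow> w \<in> C \<Longrightarrow> is_graph n E \<Longrightarrow> card (nb E C w) \<le> card C - 1"
proof -
  assume a: "finite C" "w \<in> C" "is_graph n E"
  have "w \<notin> nb E C w"
  proof
    assume "w \<in> nb E C w"
    then have "{w} \<in> E" unfolding nb_def by simp
    then obtain p q where "{w} = {p,q}" "p \<noteq> q" using a(3) unfolding is_graph_def by blast
    then show False by (metis insertCI singletonD)
  qed
  then have "nb E C w \<subseteq> C - {w}" unfolding nb_def by auto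
  then have "card (nb E C w) \<le> card (C - {w})" using a by (intro card_mono) auto
  then show ?thesis using a by simp
qed


lemma sq_choose: "d^2 = 2 * (d choose 2) + (d::nat)"
  using two_choose2[of d] by (cases d) (auto simp: power2_eq_square algebra_simps)

lemma comp_bound:
  assumes g: "is_graph n E" and nk: "\<not> contains_Klt n E l t" and l2: "2 \<le> l" and lt: "l \<le> t"
    and Y: "Y \<subseteq> {0..<n}" and F: "(\<Sum>C\<in>compsW E Y. card C div 2) \<le> k" and ks: "k + l \<le> s"
    and s0: "27*(t-1)+4 \<le> s"
  shows "(\<Sum>C\<in>compsW E Y. \<Sum>w\<in>C. card (nb E C w)) + (l-1)*k
           \<le> 2*(t-1)*((s choose l) - ((s-k) choose l))"
proof -
  define cmp where "cmp = compsW E Y"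
  have fY: "finite Y" using Y finite_subset by blast
  have fcmp: "finite cmp" unfolding cmp_def using compsW_finite fY by blast
  have CV: "C \<subseteq> {0..<n}" if "C \<in> cmp" for C using compsW_sub that Y unfolding cmp_def by blast
  have fCC: "finite C" if "C \<in> cmp" for C using CV[OF that] finite_subset by blast
  define f where "f (C::nat set) = card C div 2" for C
  define FF where "FF = (\<Sum>C\<in>cmp. f C)"
  have FFk: "FF \<le> k" using F unfolding FF_def f_def cmp_def .
  have fle: "f C \<le> FF" if "C \<in> cmp" for C
    unfolding FF_def using member_le_sum[of C cmp f] that fcmp by simp
  define OPC where "OPC (C::nat set) = (\<Sum>w\<in>C. card (nb E C w))" for C
  have ub: "OPC C \<le> card C * (card C - 1)" if "C \<in> cmp" for C
  proof -
    have "OPC C \<le> (\<Sum>w\<in>C. card C - 1)" unfolding OPC_def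
      by (rule sum_mono) (rule nb_le[OF fCC[OF that] _ g])
    then show ?thesis by simp
  qed
  have cf: "card C \<le> 2 * f C + 1" for C unfolding f_def by simp
  show ?thesis
  proof (cases "l = 2")
    case True
    have t1: "1 \<le> t" using lt l2 by simp
    have per: "OPC C \<le> f C * s" if C: "C \<in> cmp" for C
    proof (cases "f C = 0")
      case True
      then have "card C \<le> 1" using cf[of C] by simp
      then have z: "card C * (card C - 1) = 0" by (cases "card C") auto
      have "OPC C = 0" using ub[OF C] unfolding z by simp
      then show ?thesis by simp
    next
      case False
      define c where "c = card C"
      define D where "D = OPC C"
      define d where "d w = card (nb E C w)" for w
      have cnt: "(\<Sum>w\<in>C. d w choose 2) \<le> (t - 1) * (c choose 2)"
        unfolding d_def c_def using count_lemma[OF g nk[unfolded True] t1 CV[OF C] CV[OF C]] .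
      have "(\<Sum>w\<in>C. (d w)^2) = 2 * (\<Sum>w\<in>C. d w choose 2) + D"
        unfolding D_def OPC_def d_def by (simp add: sq_choose sum.distrib sum_distrib_left)
      also have "\<dots> \<le> 2 * ((t - 1) * (c choose 2)) + D" using cnt by simp
      also have "2 * ((t - 1) * (c choose 2)) = (t-1) * (c * (c - 1))"
        using two_choose2[of c] by (metis mult.left_commute)
      finally have sq: "(\<Sum>w\<in>C. (d w)^2) \<le> (t-1) * (c * (c - 1)) + D" .
      have "D^2 \<le> c * (\<Sum>w\<in>C. (d w)^2)"
        unfolding D_def OPC_def c_def d_def by (rule cs_nat[OF fCC[OF C]])
      also have "\<dots> \<le> c * ((t-1) * (c * (c - 1)) + D)" using sq by simp
      also have "\<dots> \<le> (t-1)*c^3 + c*D"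
      proof -
        have "c * ((t-1) * (c * (c - 1))) \<le> (t-1)*c^3"
          by (simp add: power3_eq_cube algebra_simps mult_le_mono)
        then show ?thesis by (simp add: algebra_simps)
      qed
      finally have H: "D*D \<le> (t-1)*c^3 + c*D" by (simp add: power2_eq_square)
      have "D \<le> f C * s"
      proof (rule kst_arith[OF H])
        show "c \<le> 2 * f C + 1" unfolding c_def by (rule cf)
        show "1 \<le> f C" using False by simp
        show "f C \<le> s" using fle[OF C] FFk ks by simp
        show "27*(t-1)+4 \<le> s" by (rule s0)
      qed
      then show ?thesis unfolding D_def .
    qed
    have "(\<Sum>C\<in>cmp. OPC C) \<le> (\<Sum>C\<in>cmp. f C * s)" by (rule sum_mono) (rule per)
    also have "\<dots> = FF * s" unfolding FF_def by (simp add: sum_distrib_right)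
    also have "\<dots> \<le> k * s" using FFk by simp
    finally have A: "(\<Sum>C\<in>cmp. OPC C) \<le> k * s" .
    have B: "k*s + k \<le> 2*(t-1)*((s choose 2) - ((s-k) choose 2))"
      by (rule l2final) (use lt True ks in auto)
    show ?thesis using A B True unfolding cmp_def OPC_def by simp
  next
    case False
    then have l3: "3 \<le> l" using l2 by simp
    have per: "OPC C \<le> 4 * (f C * f C) + 2 * f C" if C: "C \<in> cmp" for C
    proof -
      have "card C * (card C - 1) \<le> (2 * f C + 1) * (2 * f C)"
        using cf[of C] by (intro mult_le_mono) auto
      then show ?thesis using ub[OF C] by (simp add: algebra_simps)
    qed
    have "(\<Sum>C\<in>cmp. OPC C) \<le> (\<Sum>C\<in>cmp. 4 * (f C * f C) + 2 * f C)" by (rule sum_mono) (rule per)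
    also have "\<dots> = 4 * (\<Sum>C\<in>cmp. f C * f C) + 2 * FF"
      unfolding FF_def by (simp add: sum.distrib sum_distrib_left)
    also have "(\<Sum>C\<in>cmp. f C * f C) \<le> (\<Sum>C\<in>cmp. f C * FF)"
      by (rule sum_mono) (use fle in simp)
    also have "(\<Sum>C\<in>cmp. f C * FF) = FF * FF" unfolding FF_def by (simp add: sum_distrib_right)
    finally have A: "(\<Sum>C\<in>cmp. OPC C) \<le> 4 * (FF * FF) + 2 * FF" by simp
    have "4 * (FF * FF) + 2 * FF \<le> 4 * (k * k) + 2 * k" using FFk by (intro add_le_mono mult_le_mono) auto
    then have A2: "(\<Sum>C\<in>cmp. OPC C) \<le> 4*k^2 + 2*k" using A by (simp add: power2_eq_square)
    have B: "4*k^2 + 2*k + (l-1)*k \<le> 2*(t-1)*((s choose l) - ((s-k) choose l))"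
      by (rule l3final[OF l3 lt ks])
    show ?thesis using A2 B unfolding cmp_def OPC_def by simp
  qed
qed


lemma lin_aux:
  fixes ee aa bb cc kk pp qq PP QQ z1 z2 z3 ls lnn :: nat
  assumes "ee = aa + bb + bb + cc" "aa \<le> pp + PP" "bb \<le> qq + QQ" "cc + kk \<le> z1" "z1 + z2 = z3"
    "ls = kk + pp" "lnn = pp + qq" "2*(PP+QQ) \<le> z2"
  shows "ee + ls \<le> 2*lnn + z3"
  using assms by simp

lemma graph_bound:
  assumes g: "is_graph n E" and nk: "\<not> contains_Klt n E l t" and l2: "2 \<le> l" and lt: "l \<le> t"
    and X: "X \<subseteq> {0..<n}" and adm: "card X + (\<Sum>C\<in>components n E X. card C div 2) \<le> s"
    and lx: "l \<le> card X" and s0: "27*(t-1)+4 \<le> s"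
  shows "2 * card E + (l-1)*s \<le> 2*(l-1)*n + 2*(t-1)*(s choose l)"
proof -
  define V where "V = {0..<n}"
  define Y where "Y = V - X"
  define x where "x = card X"
  define k where "k = s - x"
  have fV: "finite V" unfolding V_def by simp
  have XV: "X \<subseteq> V" using X unfolding V_def .
  have fX: "finite X" using XV fV finite_subset by blast
  have fY: "finite Y" unfolding Y_def using fV by simp
  have YV: "Y \<subseteq> {0..<n}" unfolding Y_def V_def by auto
  have cY: "card Y = n - x" unfolding Y_def x_def V_def using XV fX V_def by (simp add: card_Diff_subset)
  have xn: "x \<le> n" using XV fV unfolding x_def V_def by (metis card_atLeastLessThan card_mono diff_zero)
  have Fk: "(\<Sum>C\<in>compsW E Y. card C div 2) \<le> k"
    using adm unfolding k_def x_def Y_def V_def components_eq by simp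
  have xs: "x \<le> s" using adm unfolding x_def by simp
  have ks: "k + l \<le> s" using lx xs unfolding k_def x_def by simp
  have skx: "s - k = x" using xs unfolding k_def by simp
  define dX where "dX w = card (nb E X w)" for w
  define dY where "dY w = card (nb E Y w)" for w
  have "2 * card E = (\<Sum>w\<in>V. card (nb E V w))" using twoE[OF g] unfolding V_def .
  also have "\<dots> = (\<Sum>w\<in>V. dX w + dY w)"
    unfolding dX_def dY_def Y_def using nb_split[OF fV XV] by simp
  also have "\<dots> = (\<Sum>w\<in>X. dX w + dY w) + (\<Sum>w\<in>Y. dX w + dY w)"
    unfolding Y_def by (subst sum.subset_diff[OF XV fV]) (simp add: add.commute)
  also have "\<dots> = (\<Sum>w\<in>X. dX w) + (\<Sum>w\<in>X. dY w) + (\<Sum>w\<in>Y. dX w) + (\<Sum>w\<in>Y. dY w)"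
    by (simp add: sum.distrib)
  finally have E1: "2 * card E = (\<Sum>w\<in>X. dX w) + (\<Sum>w\<in>X. dY w) + (\<Sum>w\<in>Y. dX w) + (\<Sum>w\<in>Y. dY w)" .
  have swp: "(\<Sum>w\<in>X. dY w) = (\<Sum>w\<in>Y. dX w)" unfolding dX_def dY_def by (rule nb_swap[OF fX fY])
  define cmp where "cmp = compsW E Y"
  have YY: "(\<Sum>w\<in>Y. dY w) = (\<Sum>C\<in>cmp. \<Sum>w\<in>C. card (nb E C w))"
  proof -
    have U: "\<Union>cmp = Y" unfolding cmp_def by (rule compsW_union)
    have fC: "\<forall>C\<in>cmp. finite C"
    proof
      fix C assume "C \<in> cmp"
      then have "C \<subseteq> Y" unfolding cmp_def by (rule compsW_sub)
      then show "finite C" using fY by (rule finite_subset)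
    qed
    have dj: "\<forall>A\<in>cmp. \<forall>B\<in>cmp. A \<noteq> B \<longrightarrow> A \<inter> B = {}"
    proof (intro ballI impI)
      fix A B assume AB: "A \<in> cmp" "B \<in> cmp" "A \<noteq> B"
      show "A \<inter> B = {}"
      proof (rule ccontr)
        assume "A \<inter> B \<noteq> {}"
        then obtain z where "z \<in> A" "z \<in> B" by blast
        then have "A = B" using compsW_disj[of A E Y B z] AB unfolding cmp_def by blast
        then show False using AB by simp
      qed
    qed
    have "(\<Sum>w\<in>Y. dY w) = (\<Sum>C\<in>cmp. \<Sum>w\<in>C. dY w)"
      using sum.Union_disjoint[OF fC dj, of dY] U by simp
    also have "\<dots> = (\<Sum>C\<in>cmp. \<Sum>w\<in>C. card (nb E C w))"
    proof (intro sum.cong refl)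
      fix C w assume C: "C \<in> cmp" and w: "w \<in> C"
      have "nb E Y w = nb E C w"
      proof
        show "nb E Y w \<subseteq> nb E C w"
        proof
          fix u assume "u \<in> nb E Y w"
          then have "u \<in> Y" "{w,u} \<in> E" unfolding nb_def by (auto simp: insert_commute)
          then show "u \<in> nb E C w" using compsW_edge[of C E Y w u] C w \<open>u \<in> nb E Y w\<close>
            unfolding cmp_def nb_def by auto
        qed
        show "nb E C w \<subseteq> nb E Y w" using compsW_sub C unfolding cmp_def nb_def by blast
      qed
      then show "dY w = card (nb E C w)" unfolding dY_def by simp
    qed
    finally show ?thesis .
  qed
  have l1: "1 \<le> l" using l2 by simp
  have t1: "1 \<le> t" using l2 lt by simp
  define P where "P = (\<Sum>w\<in>X. dX w choose l)"
  define Q where "Q = (\<Sum>w\<in>Y. dX w choose l)"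
  have PQ: "P + Q \<le> (t-1) * (x choose l)"
  proof -
    have "P + Q = (\<Sum>w\<in>V. dX w choose l)"
      unfolding P_def Q_def Y_def by (subst sum.subset_diff[OF XV fV]) (simp add: add.commute)
    also have "\<dots> \<le> (t-1) * (x choose l)"
      unfolding dX_def x_def V_def by (rule count_lemma[OF g nk t1 X]) simp
    finally show ?thesis .
  qed
  have BX: "(\<Sum>w\<in>X. dX w) \<le> (l-1)*x + P"
  proof -
    have "(\<Sum>w\<in>X. dX w) \<le> (\<Sum>w\<in>X. (l-1) + (dX w choose l))" by (rule sum_mono) (rule dlin[OF l1])
    then show ?thesis unfolding P_def x_def by (simp add: sum.distrib mult.commute)
  qed
  have BY: "(\<Sum>w\<in>Y. dX w) \<le> (l-1)*(n-x) + Q"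
  proof -
    have "(\<Sum>w\<in>Y. dX w) \<le> (\<Sum>w\<in>Y. (l-1) + (dX w choose l))" by (rule sum_mono) (rule dlin[OF l1])
    then show ?thesis unfolding Q_def using cY by (simp add: sum.distrib mult.commute)
  qed
  have CB: "(\<Sum>C\<in>cmp. \<Sum>w\<in>C. card (nb E C w)) + (l-1)*k \<le> 2*(t-1)*((s choose l) - (x choose l))"
    using comp_bound[OF g nk l2 lt YV Fk ks s0] skx unfolding cmp_def by simp
  have xl: "x choose l \<le> s choose l" using xs by (rule binomial_right_mono)
  have ar1: "2*(t-1)*((s choose l) - (x choose l)) + 2*(t-1)*(x choose l) = 2*(t-1)*(s choose l)"
    using xl by (metis add_mult_distrib2 le_add_diff_inverse2)
  have ar2: "(l-1)*s = (l-1)*k + (l-1)*x" using xs unfolding k_def by (metis add_mult_distrib2 le_add_diff_inverse2)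
  have ar3: "(l-1)*n = (l-1)*x + (l-1)*(n-x)" using xn by (metis add_mult_distrib2 le_add_diff_inverse)
  have ar4: "2*(t-1)*(x choose l) \<ge> 2*(P+Q)" using PQ by simp
  have E1': "2 * card E = (\<Sum>w\<in>X. dX w) + (\<Sum>w\<in>Y. dX w) + (\<Sum>w\<in>Y. dX w)
      + (\<Sum>C\<in>cmp. \<Sum>w\<in>C. card (nb E C w))" using E1 swp YY by linarith
  have "2 * card E + (l-1)*s \<le> 2*((l-1)*n) + 2*(t-1)*(s choose l)"
    by (rule lin_aux[OF E1' BX BY CB ar1 ar2 ar3 ar4])
  then show ?thesis by (simp add: mult.assoc)
qed


lemma Gfam_bound:
  assumes l2: "2 \<le> l" and lt: "l \<le> t" and s0: "27*(t-1)+4 \<le> s" and lx: "l \<le> x"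
    and EG: "E \<in> Gfam n l t s x"
  shows "2 * card E + (l-1)*s \<le> 2*(l-1)*n + 2*(t-1)*(s choose l)"
proof -
  have g: "is_graph n E" and nk: "\<not> contains_Klt n E l t" and nm: "\<not> contains_matching E (s+1)"
    and xg: "xG n E s = x" using EG unfolding Gfam_def by auto
  interpret sg E
  proof
    fix e assume "e \<in> E" then show "\<exists>u v. e = {u,v} \<and> u \<noteq> v" using g unfolding is_graph_def by blast
  qed
  have bound: "\<forall>M. matchW E {0..<n} M \<longrightarrow> card M \<le> s"
  proof (intro allI impI)
    fix M assume m: "matchW E {0..<n} M"
    show "card M \<le> s"
    proof (rule ccontr)
      assume "\<not> card M \<le> s"
      then have "s + 1 \<le> card M" by simp
      then obtain T where T: "T \<subseteq> M" "card T = s + 1" by (meson obtain_subset_with_card_n)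
      have "contains_matching E (s+1)"
        unfolding contains_matching_def
        using T m unfolding matchW_def by (intro exI[of _ T]) blast
      then show False using nm by simp
    qed
  qed
  obtain X where X: "X \<subseteq> {0..<n}" "card X + (\<Sum>C\<in>compsW E ({0..<n} - X). card C div 2) \<le> s"
    using TB[OF _ bound] by auto
  have admX: "admissible n E s X" unfolding admissible_def components_eq using X by simp
  define A where "A = {card X | X. admissible n E s X}"
  have Afin: "finite A"
  proof -
    have "A \<subseteq> {0..n}" unfolding A_def admissible_def
      by (auto, metis card_atLeastLessThan card_mono diff_zero finite_atLeastLessThan)
    then show ?thesis by (rule finite_subset) simp
  qed
  have Ane: "A \<noteq> {}" unfolding A_def using admX by blast
  have "xG n E s \<in> A" unfolding xG_def A_def[symmetric] using Max_in[OF Afin Ane] .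
  then obtain Y where Y: "admissible n E s Y" "card Y = x" using xg unfolding A_def by auto
  show ?thesis
  proof (rule graph_bound[OF g nk l2 lt])
    show "Y \<subseteq> {0..<n}" using Y unfolding admissible_def by simp
    show "card Y + (\<Sum>C\<in>components n E Y. card C div 2) \<le> s" using Y unfolding admissible_def by simp
    show "l \<le> card Y" using Y lx by simp
    show "27*(t-1)+4 \<le> s" by (rule s0)
  qed
qed

theorem corollary3p5:
  fixes l t :: nat
  assumes "2 \<le> l" and "l \<le> t"
  shows "\<exists>s0. \<forall>s\<ge>s0. \<forall>n x. n \<ge> 2 * s + 1 \<longrightarrow> l \<le> x \<longrightarrow> x \<le> s \<longrightarrow>
           int (ex_x n l t s x) \<le> int ((l - 1) * n) + int ((t - 1) * (s choose l))
              - \<lceil>real (s * (l - 1)) / 2\<rceil>"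
proof (intro exI allI impI)
  fix s n x
  assume s0: "27*(t-1)+4 \<le> s" and n: "n \<ge> 2 * s + 1" and lx: "l \<le> x" and xs: "x \<le> s"
  define R where "R = 2*(l-1)*n + 2*(t-1)*(s choose l)"
  define G where "G = Gfam n l t s x"
  have fG: "finite G"
  proof -
    have "G \<subseteq> Pow (Pow {0..<n})" unfolding G_def Gfam_def is_graph_def by auto
    then show ?thesis by (rule finite_subset) simp
  qed
  have each: "2 * card E + (l-1)*s \<le> R" if "E \<in> G" for E
    using Gfam_bound[OF assms s0 lx] that unfolding G_def R_def by blast
  have exin: "ex_x n l t s x = 0 \<or> ex_x n l t s x \<in> card ` G"
  proof (cases "G = {}")
    case True
    then show ?thesis unfolding ex_x_def G_def by simp
  next
    case False
    then have "Sup (card ` G) = Max (card ` G)" using fG by (simp add: cSup_eq_Max)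
    moreover have "Max (card ` G) \<in> card ` G" using fG False by (intro Max_in) auto
    ultimately show ?thesis unfolding ex_x_def G_def by simp
  qed
  have K: "2 * ex_x n l t s x + (l-1)*s \<le> R"
  proof -
    have h0: "(l-1)*s \<le> (l-1)*(2*n)" using n by (intro mult_le_mono) auto
    then have h: "(l-1)*s \<le> 2*(l-1)*n" by (simp add: algebra_simps)
    from exin show ?thesis
    proof
      assume "ex_x n l t s x = 0"
      then have "2 * ex_x n l t s x + (l-1)*s = (l-1)*s" by simp
      then show ?thesis unfolding R_def using h by (metis le_add1 le_trans)
    next
      assume "ex_x n l t s x \<in> card ` G"
      then show ?thesis using each by auto
    qed
  qed
  have "real (s * (l - 1)) / 2 \<le> real_of_int (int ((l - 1) * n) + int ((t - 1) * (s choose l)) - int (ex_x n l t s x))"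
  proof -
    have "real (2 * ex_x n l t s x + (l-1)*s) \<le> real R" using K by (simp only: of_nat_le_iff)
    then show ?thesis unfolding R_def by (simp add: algebra_simps)
  qed
  then have "\<lceil>real (s * (l - 1)) / 2\<rceil> \<le> int ((l - 1) * n) + int ((t - 1) * (s choose l)) - int (ex_x n l t s x)"
    by (simp add: ceiling_le_iff)
  then show "int (ex_x n l t s x) \<le> int ((l - 1) * n) + int ((t - 1) * (s choose l))
              - \<lceil>real (s * (l - 1)) / 2\<rceil>" by linarith
qed

end
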